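(* Let $Y$ be a CARMA$(p,q)$ process with $\Re(\lambda_j)<0$ for all $j$, suppose $\Re(\mu_j)\neq0$ for all $j=1,\dots,q$, and fix $t\in(0,\infty)$. For $\Delta>0$, $n\in\mathbb N$ and $\omega\in\mathbb R$ define $$h^{\Delta,1}(\omega)=\sigma\frac{\sqrt\Delta}{\sigma_\Delta}\frac{\prod_{j=1}^p(1-e^{\Delta(\lambda_j+i\omega)})}{\Theta_\Delta(e^{i\omega\Delta})}\frac{b(-i\omega)}{a(-i\omega)},\quad h^{\Delta,2}(\omega)=\frac{e^{i\omega\Delta}-1}{i\omega},\quad h^{\Delta,3}_n(\omega)=\frac{1-e^{i\omega\Delta n}}{1-e^{i\omega\Delta}}$$ (extended by continuity where the denominators vanish). Then there is a constant $C>0$ such that for all $\omega\in\mathbb R$ and all sufficiently small $\Delta>0$, $$\Big|2\Re\Big(h^{\Delta,1}h^{\Delta,3}_{\lfloor t/\Delta\rfloor}(\omega)\cdot\overline{h^{\Delta,2}h^{\Delta,3}_{\lfloor t/\Delta\rfloor}(\omega)}\Big)\Big|\le h(\omega),$$ where $h(\omega):=\big(7^{2p}/2^{2p+q}+1\big)t^2\mathbf 1_{(-1,1)}(\omega)+C\omega^{-2}\mathbf 1_{\mathbb R\setminus(-1,1)}(\omega)$. Moreover, $h$ is integrable over $\mathbb R$.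
   Context: CARMA setting: integers $p>q\ge0$, $\sigma>0$, $a(z)=z^p+a_1z^{p-1}+\dots+a_p=\prod_{i=1}^p(z-\lambda_i)$ and $b(z)=\prod_{i=1}^q(z+\mu_i)$ real polynomials without common zeroes, $\Re(\lambda_i)<0$; $Y_t=\int g(t-u)dL_u$ for a two-sided Lévy process $L$ with $\mathbb{E}L_1=0$, $\mathbb{E}L_1^2=1$ and kernel $g$ with $\int g(s)e^{i\omega s}ds=\sigma b(-i\omega)/a(-i\omega)$, $g=0$ on $(-\infty,0]$. For $\Delta>0$, $Y^\Delta_n=Y_{n\Delta}$ satisfies $\Phi_\Delta(B)Y^\Delta_n=\Theta_\Delta(B)Z^\Delta_n$ with $\Phi_\Delta(z)=\prod_{i=1}^p(1-e^{\Delta\lambda_i}z)$, $B$ the backshift, $Z^\Delta$ white noise of variance $\sigma_\Delta^2$, and $\Theta_\Delta$ the minimum-phase spectral factor (degree $p-1$, $\Theta_\Delta(0)=1$, no zeroes inside the unit circle). Known asymptotics as $\Delta\downarrow0$: $\Theta_\Delta(z)=\prod_{i=1}^{p-q-1}(1+\eta_iz)\prod_{k=1}^q(1-\zeta_kz)$ with $\zeta_k=1-\operatorname{sgn}(\Re\mu_k)\mu_k\Delta+o(\Delta)$, $\eta_i=\xi_i-1-\sqrt{(\xi_i-1)^2-1}+o(1)$, $\xi_i$ the zeroes of $\alpha_{p-q-1}$ (where $\sinh(z)/(\cosh(z)-1+x)=\sum_k\alpha_k(x)z^{2k+1}$), and $\sigma_\Delta^2=\sigma^2\Delta^{2(p-q)-1}/\big((2(p-q)-1)!\prod_i\eta_i\big)(1+o(1))$.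 *)

theory Defs
  imports "HOL-Analysis.Analysis" "HOL-Computational_Algebra.Polynomial"
begin

text \<open>Spectral density of the CARMA process Y with kernel Fourier transform
  sigma b(-i w)/a(-i w) driven by a Levy process with unit variance.\<close>
definition carma_spec_dens :: "real \<Rightarrow> real poly \<Rightarrow> real poly \<Rightarrow> real \<Rightarrow> real" where
  "carma_spec_dens \<sigma> a b \<omega> =
     \<sigma>^2 / (2*pi) * (cmod (poly (map_poly of_real b) (- \<i> * of_real \<omega>)))^2
       / (cmod (poly (map_poly of_real a) (- \<i> * of_real \<omega>)))^2"

definition sampled_spec_dens :: "real \<Rightarrow> real poly \<Rightarrow> real poly \<Rightarrow> real \<Rightarrow> real \<Rightarrow> real" where
  "sampled_spec_dens \<sigma> a b \<Delta> \<theta> =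
     (1/\<Delta>) * (\<Sum>\<^sub>\<infinity>k::int. carma_spec_dens \<sigma> a b ((\<theta> + 2 * pi * of_int k)/\<Delta>))"

definition Phi_poly :: "(nat \<Rightarrow> complex) \<Rightarrow> nat \<Rightarrow> real \<Rightarrow> complex poly" where
  "Phi_poly lam p \<Delta> = (\<Prod>i<p. [:1, - exp (of_real \<Delta> * lam i):])"

text \<open>Theta is the minimum-phase spectral factor (Theta(0)=1, degree at most p-1,
  no zeroes inside the unit circle) and sD^2 the white-noise variance of the
  ARMA representation Phi_Delta(B) Y^Delta = Theta(B) Z^Delta of the sampled
  process, expressed through equality of spectral densities.\<close>
definition min_phase_factor ::
  "real \<Rightarrow> real poly \<Rightarrow> real poly \<Rightarrow> (nat \<Rightarrow> complex) \<Rightarrow> nat \<Rightarrow> real \<Rightarrow> complex poly \<Rightarrow> real \<Rightarrow> bool" where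
  "min_phase_factor \<sigma> a b lam p \<Delta> \<Theta> sD \<longleftrightarrow>
     sD > 0 \<and> degree \<Theta> \<le> p - 1 \<and> poly \<Theta> 0 = 1 \<and>
     (\<forall>z. poly \<Theta> z = 0 \<longrightarrow> 1 \<le> cmod z) \<and>
     (\<forall>\<theta>::real. sD^2 / (2*pi) * (cmod (poly \<Theta> (exp (- \<i> * of_real \<theta>))))^2
          / (cmod (poly (Phi_poly lam p \<Delta>) (exp (- \<i> * of_real \<theta>))))^2
        = sampled_spec_dens \<sigma> a b \<Delta> \<theta>)"

definition hD1 ::
  "real \<Rightarrow> real poly \<Rightarrow> real poly \<Rightarrow> (nat \<Rightarrow> complex) \<Rightarrow> nat \<Rightarrow> real \<Rightarrow> complex poly \<Rightarrow> real \<Rightarrow> real \<Rightarrow> complex" where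
  "hD1 \<sigma> a b lam p \<Delta> \<Theta> sD \<omega> =
     of_real (\<sigma> * sqrt \<Delta> / sD)
     * (\<Prod>j<p. 1 - exp (of_real \<Delta> * (lam j + \<i> * of_real \<omega>)))
     / poly \<Theta> (exp (\<i> * of_real \<omega> * of_real \<Delta>))
     * poly (map_poly of_real b) (- \<i> * of_real \<omega>)
     / poly (map_poly of_real a) (- \<i> * of_real \<omega>)"

definition hD2 :: "real \<Rightarrow> real \<Rightarrow> complex" where
  "hD2 \<Delta> \<omega> = (if \<omega> = 0 then of_real \<Delta>
     else (exp (\<i> * of_real \<omega> * of_real \<Delta>) - 1) / (\<i> * of_real \<omega>))"

definition hD3 :: "real \<Rightarrow> nat \<Rightarrow> real \<Rightarrow> complex" where
  "hD3 \<Delta> n \<omega> = (if exp (\<i> * of_real \<omega> * of_real \<Delta>) = 1 then of_nat n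
     else (1 - exp (\<i> * of_real \<omega> * of_real \<Delta> * of_nat n)) / (1 - exp (\<i> * of_real \<omega> * of_real \<Delta>)))"

definition carma_bound :: "nat \<Rightarrow> nat \<Rightarrow> real \<Rightarrow> real \<Rightarrow> real \<Rightarrow> real" where
  "carma_bound p q t C \<omega> =
     (7^(2*p) / 2^(2*p+q) + 1) * t^2 * indicator {-1<..<1} \<omega>
     + C * \<omega> powi (-2) * indicator (- {-1<..<1}) \<omega>"

end

theory Submission
  imports Defs
begin


lemma cmod_expi_m1: "cmod (exp (\<i> * of_real x) - 1) = 2 * \<bar>sin (x/2)\<bar>"
proof -
  have e: "exp (\<i> * of_real x) = Complex (cos x) (sin x)"
    by (simp add: cis_conv_exp[symmetric] cis.ctr)
  have "(cmod (exp (\<i> * of_real x) - 1))^2 = (cos x - 1)^2 + (sin x)^2"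
    by (simp add: e cmod_def)
  also have "\<dots> = 2 - 2 * cos x" using sin_cos_squared_add[of x] by (simp add: power2_eq_square algebra_simps)
  also have "cos x = 1 - 2 * sin (x/2) ^ 2" using cos_double_sin[of "x/2"] by simp
  finally have "(cmod (exp (\<i> * of_real x) - 1))^2 = (2 * \<bar>sin (x/2)\<bar>)^2" by (simp add: power2_eq_square)
  thus ?thesis by (rule power2_eq_imp_eq) auto
qed

lemma cmod_expi_m1_le: "cmod (exp (\<i> * of_real x) - 1) \<le> \<bar>x\<bar>"
  using abs_sin_x_le_abs_x[of "x/2"] by (simp add: cmod_expi_m1)

lemma sin_lower: assumes "\<bar>x\<bar> \<le> pi/2" shows "\<bar>x\<bar>/3 \<le> \<bar>sin x\<bar>"
proof -
  have m: "\<bar>sin x - (\<Sum>m<3. sin_coeff m * x ^ m)\<bar> \<le> inverse (fact 3) * \<bar>x\<bar> ^ 3"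
    by (rule Maclaurin_sin_bound)
  have s: "(\<Sum>m<3. sin_coeff m * x ^ m) = x"
    by (simp add: numeral_3_eq_3 sin_coeff_def)
  have "\<bar>x\<bar>^2 \<le> (pi/2)^2" using assms by (intro power_mono) auto
  also have "\<dots> \<le> 4"
  proof -
    have "pi * pi \<le> 4 * 4" using pi_less_4 pi_gt_zero by (intro mult_mono) auto
    thus ?thesis by (simp add: power2_eq_square)
  qed
  finally have x2: "\<bar>x\<bar>^2 \<le> 4" .
  have "inverse (fact 3) * \<bar>x\<bar> ^ 3 = \<bar>x\<bar> * (\<bar>x\<bar>^2 / 6)" by (simp add: fact_numeral power3_eq_cube power2_eq_square field_simps)
  also have "\<dots> \<le> \<bar>x\<bar> * (2/3)" using x2 by (intro mult_left_mono) auto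
  finally have "\<bar>sin x - x\<bar> \<le> \<bar>x\<bar> * (2/3)" using m s by simp
  thus ?thesis by linarith
qed

lemma cmod_expi_m1_ge: assumes "\<bar>y\<bar> \<le> pi" shows "\<bar>y\<bar>/3 \<le> cmod (exp (\<i> * of_real y) - 1)"
proof -
  have "\<bar>y/2\<bar>/3 \<le> \<bar>sin (y/2)\<bar>" using assms by (intro sin_lower) auto
  thus ?thesis by (simp add: cmod_expi_m1)
qed



lemma e_pow: "exp (\<i> * of_real \<omega> * of_real \<Delta> * of_nat n) = exp (\<i> * of_real \<omega> * of_real \<Delta>) ^ n"
  by (simp add: exp_of_nat_mult[symmetric] mult.commute)

lemma e_norm: "cmod (exp (\<i> * of_real \<omega> * of_real \<Delta>)) = 1"
proof -
  have "\<i> * of_real \<omega> * of_real \<Delta> = \<i> * of_real (\<omega> * \<Delta>)" by simp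
  thus ?thesis by (simp only: norm_exp_i_times)
qed

lemma hD3_le_n: "cmod (hD3 \<Delta> n \<omega>) \<le> real n"
proof (cases "exp (\<i> * of_real \<omega> * of_real \<Delta>) = 1")
  case True thus ?thesis by (simp add: hD3_def)
next
  case False
  define e where "e = exp (\<i> * of_real \<omega> * of_real \<Delta>)"
  have "hD3 \<Delta> n \<omega> = (1 - e^n)/(1 - e)" using False by (simp add: hD3_def e_def e_pow)
  also have "\<dots> = (\<Sum>k<n. e^k)" using False by (simp add: sum_gp_strict e_def)
  finally have "cmod (hD3 \<Delta> n \<omega>) \<le> (\<Sum>k<n. cmod (e^k))" by (simp add: norm_sum)
  also have "\<dots> = real n" by (simp add: norm_power e_def e_norm)
  finally show ?thesis .
qed

lemma hD3_le2: assumes "exp (\<i> * of_real \<omega> * of_real \<Delta>) \<noteq> 1"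
  shows "cmod (hD3 \<Delta> n \<omega>) \<le> 2 / cmod (1 - exp (\<i> * of_real \<omega> * of_real \<Delta>))"
proof -
  define e where "e = exp (\<i> * of_real \<omega> * of_real \<Delta>)"
  have "hD3 \<Delta> n \<omega> = (1 - e^n)/(1 - e)" using assms by (simp add: hD3_def e_def e_pow)
  hence "cmod (hD3 \<Delta> n \<omega>) = cmod (1 - e^n) / cmod (1 - e)" by (simp add: norm_divide)
  also have "cmod (1 - e^n) \<le> 2"
    using norm_triangle_ineq4[of 1 "e^n"] by (simp add: norm_power e_def e_norm)
  hence "cmod (1 - e^n) / cmod (1 - e) \<le> 2 / cmod (1 - e)" by (intro divide_right_mono) auto
  finally show ?thesis by (simp add: e_def)
qed

lemma hD2_le: assumes "\<Delta> > 0" shows "cmod (hD2 \<Delta> \<omega>) \<le> \<Delta>"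
proof (cases "\<omega> = 0")
  case True thus ?thesis using assms by (simp add: hD2_def)
next
  case False
  have "\<i> * of_real \<omega> * of_real \<Delta> = \<i> * of_real (\<omega> * \<Delta>)" by simp
  hence "cmod (exp (\<i> * of_real \<omega> * of_real \<Delta>) - 1) \<le> \<bar>\<omega> * \<Delta>\<bar>"
    by (simp only: cmod_expi_m1_le)
  hence "cmod (exp (\<i> * of_real \<omega> * of_real \<Delta>) - 1) / \<bar>\<omega>\<bar> \<le> \<bar>\<omega> * \<Delta>\<bar> / \<bar>\<omega>\<bar>"
    by (intro divide_right_mono) auto
  thus ?thesis using False assms by (simp add: hD2_def norm_divide norm_mult abs_mult)
qed

lemma hD23_le: assumes "\<omega> \<noteq> 0" shows "cmod (hD2 \<Delta> \<omega> * hD3 \<Delta> n \<omega>) \<le> 2 / \<bar>\<omega>\<bar>"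
proof (cases "exp (\<i> * of_real \<omega> * of_real \<Delta>) = 1")
  case True thus ?thesis using assms by (simp add: hD2_def)
next
  case False
  define e where "e = exp (\<i> * of_real \<omega> * of_real \<Delta>)"
  have ne: "1 - e \<noteq> 0" using False by (simp add: e_def)
  have "hD2 \<Delta> \<omega> * hD3 \<Delta> n \<omega> = (e - 1)/(\<i> * of_real \<omega>) * ((1 - e^n)/(1 - e))"
    using False assms by (simp add: hD3_def hD2_def e_def e_pow)
  also have "\<dots> = ((e - 1)/(1 - e)) * (1 - e^n) / (\<i> * of_real \<omega>)" by simp
  also have "(e - 1)/(1 - e) = -1" using ne by (simp add: divide_eq_eq)
  also have "- 1 * (1 - e^n) / (\<i> * of_real \<omega>) = (e^n - 1)/(\<i> * of_real \<omega>)" by simp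
  finally have "cmod (hD2 \<Delta> \<omega> * hD3 \<Delta> n \<omega>) = cmod (e^n - 1) / \<bar>\<omega>\<bar>" by (simp add: norm_divide norm_mult)
  also have "cmod (e^n - 1) \<le> 2"
    using norm_triangle_ineq4[of "e^n" 1] by (simp add: norm_power e_def e_norm)
  hence "cmod (e^n - 1) / \<bar>\<omega>\<bar> \<le> 2 / \<bar>\<omega>\<bar>" by (intro divide_right_mono) auto
  finally show ?thesis .
qed



lemma fact_bounds:
  assumes "Re c \<noteq> 0"
  shows "\<bar>Re c\<bar>/(1 + cmod c + \<bar>Re c\<bar>) * (1+\<bar>x\<bar>) \<le> cmod (-\<i> * of_real x - c)"
    and "cmod (-\<i> * of_real x - c) \<le> (1 + cmod c) * (1 + \<bar>x\<bar>)"
proof -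
  define d where "d = cmod (-\<i> * of_real x - c)"
  define r where "r = \<bar>Re c\<bar>"
  define s where "s = cmod c"
  have nx: "cmod (-\<i> * of_real x) = \<bar>x\<bar>" by (simp add: norm_mult)
  have r: "r \<le> d" unfolding r_def d_def using abs_Re_le_cmod[of "-\<i> * of_real x - c"] by simp
  have "\<bar>x\<bar> - s \<le> d" unfolding d_def s_def using norm_triangle_ineq2[of "-\<i> * of_real x" c] nx by simp
  hence x: "1 + \<bar>x\<bar> \<le> 1 + s + d" by simp
  have rp: "r > 0" using assms by (simp add: r_def)
  have sp: "s \<ge> 0" by (simp add: s_def)
  have "r/(1+s+r) * (1+\<bar>x\<bar>) \<le> r/(1+s+r) * (1+s+d)" using x rp sp by (intro mult_left_mono) auto
  also have "\<dots> \<le> d"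
  proof -
    have "r * (1+s+d) \<le> d * (1+s+r)" using r sp rp by (simp add: algebra_simps) (metis add_mono mult_right_mono order_refl sp r mult.commute)
    thus ?thesis using rp sp by (simp add: divide_le_eq)
  qed
  finally show "\<bar>Re c\<bar>/(1 + cmod c + \<bar>Re c\<bar>) * (1+\<bar>x\<bar>) \<le> cmod (-\<i> * of_real x - c)"
    by (simp add: r_def s_def d_def)
  have "d \<le> \<bar>x\<bar> + s" unfolding d_def s_def using norm_triangle_ineq4[of "-\<i> * of_real x" c] nx by simp
  also have "\<dots> \<le> (1+s)*(1+\<bar>x\<bar>)" using sp by (simp add: algebra_simps)
  finally show "cmod (-\<i> * of_real x - c) \<le> (1 + cmod c) * (1 + \<bar>x\<bar>)" by (simp add: d_def s_def)
qed

lemma prod_bounds: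
  fixes c :: "nat \<Rightarrow> complex"
  assumes "\<forall>i<n. Re (c i) \<noteq> 0"
  defines "lo \<equiv> (\<Prod>i<n. \<bar>Re (c i)\<bar>/(1 + cmod (c i) + \<bar>Re (c i)\<bar>))"
  defines "hi \<equiv> (\<Prod>i<n. 1 + cmod (c i))"
  shows "lo > 0" "hi > 0"
    "lo * (1+\<bar>x\<bar>)^n \<le> (\<Prod>i<n. cmod (-\<i> * of_real x - c i))"
    "(\<Prod>i<n. cmod (-\<i> * of_real x - c i)) \<le> hi * (1+\<bar>x\<bar>)^n"
proof -
  show "lo > 0" unfolding lo_def using assms
    by (intro prod_pos) (auto intro!: divide_pos_pos add_pos_nonneg)
  show "hi > 0" unfolding hi_def by (intro prod_pos) (auto intro: add_pos_nonneg)
  have "lo * (1+\<bar>x\<bar>)^n = (\<Prod>i<n. \<bar>Re (c i)\<bar>/(1 + cmod (c i) + \<bar>Re (c i)\<bar>) * (1+\<bar>x\<bar>))"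
    by (simp only: lo_def prod.distrib prod_constant card_lessThan)
  also have "\<dots> \<le> (\<Prod>i<n. cmod (-\<i> * of_real x - c i))"
    using assms fact_bounds(1) by (intro prod_mono) (auto simp del: mult_minus_left)
  finally show "lo * (1+\<bar>x\<bar>)^n \<le> (\<Prod>i<n. cmod (-\<i> * of_real x - c i))" .
  have "(\<Prod>i<n. cmod (-\<i> * of_real x - c i)) \<le> (\<Prod>i<n. (1 + cmod (c i)) * (1+\<bar>x\<bar>))"
    using assms fact_bounds(2) by (intro prod_mono) (auto simp del: mult_minus_left)
  also have "\<dots> = hi * (1+\<bar>x\<bar>)^n" by (simp add: hi_def prod.distrib)
  finally show "(\<Prod>i<n. cmod (-\<i> * of_real x - c i)) \<le> hi * (1+\<bar>x\<bar>)^n" .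
qed

lemma pow_ratio:
  fixes X Y :: real
  assumes "1 \<le> Y" "Y \<le> X" "q < p"
  shows "X^q * Y^p * X \<le> X^p * Y^q * Y"
proof -
  obtain m where p: "p = q + 1 + m" using assms(3) by (metis less_iff_Suc_add add.commute add_Suc_right Suc_eq_plus1 add.assoc)
  have "X^q * Y^p * X = (X^(q+1) * Y^(q+1)) * Y^m" by (simp add: p power_add algebra_simps)
  also have "\<dots> \<le> (X^(q+1) * Y^(q+1)) * X^m" using assms by (intro mult_left_mono power_mono) auto
  also have "\<dots> = X^p * Y^q * Y" by (simp add: p power_add algebra_simps)
  finally show ?thesis .
qed

lemma ratio_bound:
  fixes cN cD :: "nat \<Rightarrow> complex"
  assumes "\<forall>i<q. Re (cN i) \<noteq> 0" "\<forall>i<p. Re (cD i) \<noteq> 0" "q < p"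
  shows "\<exists>K>0. \<forall>x y. \<bar>y\<bar> \<le> \<bar>x\<bar> \<longrightarrow>
     (\<Prod>i<q. cmod (-\<i> * of_real x - cN i)) * (\<Prod>i<p. cmod (-\<i> * of_real y - cD i))
     \<le> K * (\<Prod>i<p. cmod (-\<i> * of_real x - cD i)) * (\<Prod>i<q. cmod (-\<i> * of_real y - cN i)) * ((1+\<bar>y\<bar>)/(1+\<bar>x\<bar>))"
proof -
  note N = prod_bounds[OF assms(1)]
  note D = prod_bounds[OF assms(2)]
  define loN where "loN = (\<Prod>i<q. \<bar>Re (cN i)\<bar>/(1 + cmod (cN i) + \<bar>Re (cN i)\<bar>))"
  define hiN where "hiN = (\<Prod>i<q. 1 + cmod (cN i))"
  define loD where "loD = (\<Prod>i<p. \<bar>Re (cD i)\<bar>/(1 + cmod (cD i) + \<bar>Re (cD i)\<bar>))"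
  define hiD where "hiD = (\<Prod>i<p. 1 + cmod (cD i))"
  note N' = N[folded loN_def hiN_def]
  note D' = D[folded loD_def hiD_def]
  define K where "K = hiN * hiD / (loN * loD)"
  have Kp: "K > 0" using N'(1,2) D'(1,2) by (simp add: K_def)
  show ?thesis
  proof (intro exI[of _ K] conjI allI impI Kp)
    fix x y :: real assume xy: "\<bar>y\<bar> \<le> \<bar>x\<bar>"
    define X where "X = 1 + \<bar>x\<bar>"
    define Y where "Y = 1 + \<bar>y\<bar>"
    have Y1: "1 \<le> Y" and YX: "Y \<le> X" using xy by (auto simp: X_def Y_def)
    define nx where "nx = (\<Prod>i<q. cmod (-\<i> * of_real x - cN i))"
    define ny where "ny = (\<Prod>i<q. cmod (-\<i> * of_real y - cN i))"
    define dx where "dx = (\<Prod>i<p. cmod (-\<i> * of_real x - cD i))"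
    define dy where "dy = (\<Prod>i<p. cmod (-\<i> * of_real y - cD i))"
    have nx: "nx \<le> hiN * X^q" using N'(4)[of x] by (simp add: nx_def X_def)
    have ny: "loN * Y^q \<le> ny" using N'(3)[of y] by (simp add: ny_def Y_def)
    have dx: "loD * X^p \<le> dx" using D'(3)[of x] by (simp add: dx_def X_def)
    have dy: "dy \<le> hiD * Y^p" using D'(4)[of y] by (simp add: dy_def Y_def)
    have pos: "0 \<le> nx" "0 \<le> dy" "X > 0" "Y > 0" "0 \<le> dx" using Y1 YX by (auto simp: nx_def dy_def dx_def intro!: prod_nonneg)
    have "nx * dy \<le> (hiN * X^q) * (hiD * Y^p)" using nx dy pos N'(2) by (intro mult_mono) auto
    also have "\<dots> = K * (loD * loN) * (X^q * Y^p * X) / X"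
      using N'(1) D'(1) pos by (simp add: K_def field_simps)
    also have "\<dots> \<le> K * (loD * loN) * (X^p * Y^q * Y) / X"
      using pow_ratio[OF Y1 YX assms(3)] Kp N'(1) D'(1) pos
      by (intro divide_right_mono mult_left_mono) auto
    also have "\<dots> = K * (loD * X^p) * (loN * Y^q) * (Y / X)" by (simp add: field_simps)
    also have "\<dots> \<le> K * dx * ny * (Y / X)"
      using dx ny Kp N'(1) D'(1) pos
      by (intro mult_right_mono mult_mono mult_left_mono) (auto intro!: mult_nonneg_nonneg)
    finally show "nx * dy \<le> K * dx * ny * ((1+\<bar>y\<bar>)/(1+\<bar>x\<bar>))" by (simp add: X_def Y_def)
  qed
qed



lemma csd_nonneg: "carma_spec_dens \<sigma> a b x \<ge> 0"
  by (simp add: carma_spec_dens_def)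

lemma Phi_eval: "poly (Phi_poly lam p \<Delta>) (exp (\<i> * of_real \<omega> * of_real \<Delta>))
   = (\<Prod>j<p. 1 - exp (of_real \<Delta> * (lam j + \<i> * of_real \<omega>)))"
  unfolding Phi_poly_def poly_prod
proof (rule prod.cong[OF refl])
  fix j
  have "of_real \<Delta> * (lam j + \<i> * of_real \<omega>) = of_real \<Delta> * lam j + \<i> * of_real \<omega> * of_real \<Delta>"
    by (simp add: algebra_simps)
  thus "poly [:1, - exp (of_real \<Delta> * lam j):] (exp (\<i> * of_real \<omega> * of_real \<Delta>)) =
        1 - exp (of_real \<Delta> * (lam j + \<i> * of_real \<omega>))"
    by (simp add: exp_add algebra_simps)
qed

lemma H1:
  assumes D: "\<Delta> > 0" and sg: "\<sigma> > 0" and mpf: "min_phase_factor \<sigma> a b lam p \<Delta> \<Theta> sD"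
    and w: "w = (-(\<omega>*\<Delta>) + 2 * pi * of_int k)/\<Delta>"
  shows "cmod (hD1 \<sigma> a b lam p \<Delta> \<Theta> sD \<omega>) *
     (cmod (poly (map_poly of_real b) (-\<i> * of_real w)) / cmod (poly (map_poly of_real a) (-\<i> * of_real w)))
   \<le> \<Delta> * (cmod (poly (map_poly of_real b) (-\<i> * of_real \<omega>)) / cmod (poly (map_poly of_real a) (-\<i> * of_real \<omega>)))"
proof -
  define z where "z = exp (\<i> * of_real \<omega> * of_real \<Delta>)"
  define P where "P = (\<Prod>j<p. 1 - exp (of_real \<Delta> * (lam j + \<i> * of_real \<omega>)))"
  define gw where "gw = cmod (poly (map_poly of_real b) (-\<i> * of_real w)) / cmod (poly (map_poly of_real a) (-\<i> * of_real w))"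
  define go where "go = cmod (poly (map_poly of_real b) (-\<i> * of_real \<omega>)) / cmod (poly (map_poly of_real a) (-\<i> * of_real \<omega>))"
  define cP where "cP = cmod P"
  define cT where "cT = cmod (poly \<Theta> z)"
  have sD: "sD > 0" using mpf by (simp add: min_phase_factor_def)
  have gw0: "gw \<ge> 0" and go0: "go \<ge> 0" by (simp_all add: gw_def go_def)
  have h1: "cmod (hD1 \<sigma> a b lam p \<Delta> \<Theta> sD \<omega>) = (\<sigma> * sqrt \<Delta> / sD) * cP / cT * go"
    using sg D sD by (simp add: hD1_def norm_mult norm_divide cP_def cT_def P_def z_def go_def)
  show ?thesis
  proof (cases "cP = 0 \<or> cT = 0")
    case True
    hence "cmod (hD1 \<sigma> a b lam p \<Delta> \<Theta> sD \<omega>) = 0" using h1 by auto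
    thus ?thesis using D go0 by (simp add: go_def)
  next
    case False
    hence cP: "cP > 0" and cT: "cT > 0" by (auto simp: cP_def cT_def)
    define F where "F = (\<lambda>k::int. carma_spec_dens \<sigma> a b ((-(\<omega>*\<Delta>) + 2 * pi * of_int k)/\<Delta>))"
    have "sD^2 / (2*pi) * (cmod (poly \<Theta> (exp (- \<i> * of_real (-(\<omega>*\<Delta>))))))^2
          / (cmod (poly (Phi_poly lam p \<Delta>) (exp (- \<i> * of_real (-(\<omega>*\<Delta>))))))^2
        = sampled_spec_dens \<sigma> a b \<Delta> (-(\<omega>*\<Delta>))"
      using mpf unfolding min_phase_factor_def by blast
    moreover have "exp (- \<i> * of_real (-(\<omega>*\<Delta>))) = z" by (simp add: z_def mult.assoc)
    ultimately have spec: "sD^2 / (2*pi) * cT^2 / cP^2 = (1/\<Delta>) * infsum F UNIV"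
      by (simp add: cT_def cP_def P_def z_def Phi_eval sampled_spec_dens_def F_def)
    have "sD^2 / (2*pi) * cT^2 / cP^2 > 0" using sD cT cP by simp
    hence "(1/\<Delta>) * infsum F UNIV > 0" by (simp only: spec)
    hence Ipos: "infsum F UNIV > 0" using D by (simp add: zero_less_divide_iff)
    hence summ: "F summable_on UNIV" using infsum_not_exists by force
    have "infsum F {k} \<le> infsum F UNIV"
      by (rule infsum_mono_neutral) (use summ in \<open>auto simp: F_def csd_nonneg\<close>)
    hence Fk: "F k \<le> infsum F UNIV" by simp
    have "F k = carma_spec_dens \<sigma> a b w" by (simp only: F_def w)
    hence "F k = \<sigma>^2/(2*pi) * gw^2"
      by (simp add: carma_spec_dens_def gw_def power_divide)
    hence Fk': "\<sigma>^2/(2*pi) * gw^2 \<le> infsum F UNIV" using Fk by simp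
    have "\<sigma>^2/(2*pi) * gw^2 / \<Delta> \<le> infsum F UNIV / \<Delta>"
      using D by (intro divide_right_mono[OF Fk']) auto
    hence "\<sigma>^2/(2*pi) * gw^2 / \<Delta> \<le> (1/\<Delta>) * infsum F UNIV" by simp
    hence "\<sigma>^2/(2*pi) * gw^2 / \<Delta> \<le> sD^2 / (2*pi) * cT^2 / cP^2"
      by (simp only: spec)
    hence "\<sigma>^2 * gw^2 * cP^2 \<le> sD^2 * \<Delta> * cT^2"
      using D cP pi_gt_zero by (simp add: field_simps)
    hence "(\<sigma> * gw * cP)^2 \<le> (sD * sqrt \<Delta> * cT)^2"
      using D by (simp add: power_mult_distrib)
    hence key: "\<sigma> * gw * cP \<le> sD * sqrt \<Delta> * cT"
      by (rule power2_le_imp_le) (use sD D cT in auto)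
    have "cmod (hD1 \<sigma> a b lam p \<Delta> \<Theta> sD \<omega>) * gw = (sqrt \<Delta> / (sD * cT)) * (\<sigma> * gw * cP) * go"
      using h1 sD cT by (simp add: field_simps)
    also have "\<dots> \<le> (sqrt \<Delta> / (sD * cT)) * (sD * sqrt \<Delta> * cT) * go"
      using key sD cT D go0 by (intro mult_right_mono mult_left_mono) auto
    also have "\<dots> = \<Delta> * go" using sD cT D by simp
    finally show ?thesis by (simp add: gw_def go_def)
  qed
qed



lemma F1_int: "integrable lborel (\<lambda>x::real. indicator {1..} x * (1 / x^2))"
proof -
  have "((\<lambda>x::real. 1 / x ^ 2) has_integral 1 / (real (2 - 1) * 1 ^ (2 - 1))) {1..}"
    by (rule has_integral_inverse_power_to_inf) auto
  hence "(\<lambda>x::real. 1 / x ^ 2) integrable_on {1..}" by blast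
  hence "(\<lambda>x::real. if x \<in> {1..} then 1 / x ^ 2 else 0) integrable_on UNIV"
    by (simp only: integrable_restrict_UNIV)
  moreover have "(\<lambda>x::real. if x \<in> {1..} then 1 / x ^ 2 else 0) = (\<lambda>x. indicator {1..} x * (1 / x^2))"
    by (auto simp: indicator_def)
  ultimately have i: "(\<lambda>x::real. indicator {1..} x * (1 / x^2)) integrable_on UNIV" by simp
  have "(\<lambda>x::real. indicator {1..} x * (1 / x^2)) absolutely_integrable_on UNIV"
    by (rule nonnegative_absolutely_integrable_1[OF i]) (auto simp: indicator_def)
  hence "integrable lebesgue (\<lambda>x::real. indicator {1..} x * (1 / x^2))"
    by (simp add: set_integrable_def)
  thus ?thesis
    by (subst integrable_completion[symmetric]) auto
qed

lemma G_int: "integrable lborel (\<lambda>x::real. x powi (-2) * indicator (- {-1<..<1}) x)"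
proof -
  have a: "integrable lborel (\<lambda>x::real. indicator {1..} x * (1 / x^2))" by (rule F1_int)
  have b: "integrable lborel (\<lambda>x::real. indicator {1..} (0 + (-1) * x) * (1 / (0 + (-1) * x)^2))"
    using lborel_integrable_real_affine_iff[of "-1" "\<lambda>x::real. indicator {1..} x * (1 / x^2)" 0] a by simp
  have c: "integrable lborel (\<lambda>x::real. indicator {1..} x * (1 / x^2) + indicator {1..} (0 + (-1) * x) * (1 / (0 + (-1) * x)^2))"
    using a b by (rule Bochner_Integration.integrable_add)
  have eq: "(\<lambda>x::real. indicator {1..} x * (1 / x^2) + indicator {1..} (0 + (-1) * x) * (1 / (0 + (-1) * x)^2)) = (\<lambda>x. x powi (-2) * indicator (- {-1<..<1}) x)"
    by (rule ext) (auto simp: indicator_def power_int_minus field_simps)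
  show ?thesis using c unfolding eq .
qed

lemma bound_int: "integrable lborel (carma_bound p q t C)"
proof -
  have i1: "integrable lborel (indicator {-1<..<1::real} :: real \<Rightarrow> real)"
    by (rule integrable_real_indicator) auto
  have "integrable lborel (\<lambda>x::real. (7^(2*p) / 2^(2*p+q) + 1) * t^2 * indicator {-1<..<1} x
     + C * (x powi (-2) * indicator (- {-1<..<1}) x))"
    using i1 G_int by (intro Bochner_Integration.integrable_add integrable_mult_right) auto
  thus ?thesis unfolding carma_bound_def by (simp add: mult.assoc)
qed

lemma real_poly_even:
  "cmod (poly (map_poly of_real r) (cnj z)) = cmod (poly (map_poly (of_real :: real \<Rightarrow> complex) r) z)"
proof -
  have "cnj (poly (map_poly of_real r) z) = poly (map_poly (of_real :: real \<Rightarrow> complex) r) (cnj z)"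
    by (rule poly_cnj_real) (simp add: coeff_map_poly)
  thus ?thesis by (metis complex_mod_cnj)
qed

lemma const_ge: "q < p \<Longrightarrow> (1::real) \<le> 7^(2*p) / 2^(2*p+q)"
proof -
  assume "q < p"
  hence "(2::nat)^(2*p+q) \<le> 2^(3*p)" by (intro power_increasing) auto
  also have "(2::nat)^(3*p) = 8^p" by (simp add: power_mult)
  also have "(8::nat)^p \<le> 49^p" by (intro power_mono) auto
  also have "(49::nat)^p = 7^(2*p)" by (simp add: power_mult)
  finally have "(2::real)^(2*p+q) \<le> 7^(2*p)" by (metis of_nat_le_iff of_nat_numeral of_nat_power)
  thus ?thesis by simp
qed



theorem lemmaA3:
  fixes p q :: nat and \<sigma> t :: real and a b :: "real poly"
    and lam mu :: "nat \<Rightarrow> complex"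
    and Theta :: "real \<Rightarrow> complex poly" and sigD :: "real \<Rightarrow> real"
  assumes "q < p" and "\<sigma> > 0" and "t > 0"
    and "map_poly of_real a = (\<Prod>i<p. [:- lam i, 1:])"
    and "map_poly of_real b = (\<Prod>k<q. [:mu k, 1:])"
    and "\<forall>i<p. \<forall>k<q. lam i \<noteq> - mu k"
    and "\<forall>i<p. Re (lam i) < 0"
    and "\<forall>k<q. Re (mu k) \<noteq> 0"
    and "\<forall>\<Delta>>0. min_phase_factor \<sigma> a b lam p \<Delta> (Theta \<Delta>) (sigD \<Delta>)"
  shows "\<exists>C>0.
    (\<exists>\<delta>>0. \<forall>\<Delta>. 0 < \<Delta> \<and> \<Delta> < \<delta> \<longrightarrow> (\<forall>\<omega>::real.
       \<bar>2 * Re (hD1 \<sigma> a b lam p \<Delta> (Theta \<Delta>) (sigD \<Delta>) \<omega> * hD3 \<Delta> (nat \<lfloor>t/\<Delta>\<rfloor>) \<omega>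
               * cnj (hD2 \<Delta> \<omega> * hD3 \<Delta> (nat \<lfloor>t/\<Delta>\<rfloor>) \<omega>))\<bar>
       \<le> carma_bound p q t C \<omega>))
    \<and> integrable lborel (carma_bound p q t C)"
proof -
  note qp = assms(1) and sg = assms(2) and tp = assms(3) and ha = assms(4) and hb = assms(5)
    and lamneg = assms(7) and mure = assms(8) and mpf = assms(9)
  define gN where "gN = (\<lambda>x::real. \<Prod>k<q. cmod (-\<i> * of_real x - (- mu k)))"
  define gD where "gD = (\<lambda>x::real. \<Prod>j<p. cmod (-\<i> * of_real x - lam j))"
  have PN: "cmod (poly (map_poly of_real b) (-\<i> * of_real x)) = gN x" for x
    by (simp add: hb gN_def poly_prod prod_norm[symmetric] algebra_simps)
  have PD: "cmod (poly (map_poly of_real a) (-\<i> * of_real x)) = gD x" for x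
  proof -
    have "cmod (poly (map_poly of_real a) (-\<i> * of_real x)) = (\<Prod>j<p. cmod (- lam j + (-\<i> * of_real x)))"
      by (simp add: ha poly_prod prod_norm[symmetric])
    also have "\<dots> = gD x" unfolding gD_def by (intro prod.cong refl arg_cong[where f=cmod]) simp
    finally show ?thesis .
  qed
  have reN: "\<forall>i<q. Re (- mu i) \<noteq> 0" using mure by simp
  have reD: "\<forall>i<p. Re (lam i) \<noteq> 0" using lamneg by (metis less_irrefl)
  have gNpos: "gN x > 0" for x
  proof -
    have "0 < (\<Prod>i<q. \<bar>Re (- mu i)\<bar>/(1 + cmod (- mu i) + \<bar>Re (- mu i)\<bar>)) * (1+\<bar>x\<bar>)^q"
      using prod_bounds(1)[OF reN] by simp
    also have "\<dots> \<le> gN x" unfolding gN_def by (rule prod_bounds(3)[OF reN])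
    finally show ?thesis .
  qed
  have gDpos: "gD x > 0" for x
  proof -
    have "0 < (\<Prod>i<p. \<bar>Re (lam i)\<bar>/(1 + cmod (lam i) + \<bar>Re (lam i)\<bar>)) * (1+\<bar>x\<bar>)^p"
      using prod_bounds(1)[OF reD] by simp
    also have "\<dots> \<le> gD x" unfolding gD_def by (rule prod_bounds(3)[OF reD])
    finally show ?thesis .
  qed
  have evN: "gN (-x) = gN x" for x
  proof -
    have "cnj (-\<i> * of_real x) = -\<i> * of_real (-x)" by simp
    thus ?thesis using real_poly_even[of b "-\<i> * of_real x"] PN by metis
  qed
  have evD: "gD (-x) = gD x" for x
  proof -
    have "cnj (-\<i> * of_real x) = -\<i> * of_real (-x)" by simp
    thus ?thesis using real_poly_even[of a "-\<i> * of_real x"] PD by metis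
  qed
  obtain K where Kp: "K > 0" and KR: "\<And>x y. \<bar>y\<bar> \<le> \<bar>x\<bar> \<Longrightarrow> gN x * gD y \<le> K * gD x * gN y * ((1+\<bar>y\<bar>)/(1+\<bar>x\<bar>))"
    using ratio_bound[OF reN reD qp] unfolding gN_def gD_def by blast
  define C where "C = 4 * K * (t + 6)"
  have Cp: "C > 0" using Kp tp by (simp add: C_def)
  have main: "\<bar>2 * Re (hD1 \<sigma> a b lam p \<Delta> (Theta \<Delta>) (sigD \<Delta>) \<omega> * hD3 \<Delta> (nat \<lfloor>t/\<Delta>\<rfloor>) \<omega>
               * cnj (hD2 \<Delta> \<omega> * hD3 \<Delta> (nat \<lfloor>t/\<Delta>\<rfloor>) \<omega>))\<bar>
       \<le> carma_bound p q t C \<omega>" if D: "\<Delta> > 0" for \<Delta> \<omega>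
  proof -
    define n where "n = nat \<lfloor>t/\<Delta>\<rfloor>"
    define h1 where "h1 = hD1 \<sigma> a b lam p \<Delta> (Theta \<Delta>) (sigD \<Delta>) \<omega>"
    define h2 where "h2 = hD2 \<Delta> \<omega>"
    define h3 where "h3 = hD3 \<Delta> n \<omega>"
    have nD: "real n * \<Delta> \<le> t"
    proof -
      have "0 \<le> \<lfloor>t/\<Delta>\<rfloor>" using tp D by simp
      hence "real n = of_int \<lfloor>t/\<Delta>\<rfloor>" by (simp add: n_def)
      hence "real n \<le> t / \<Delta>" using of_int_floor_le[of "t/\<Delta>"] by simp
      thus ?thesis using D by (simp add: field_simps)
    qed
    have H1k: "cmod h1 * (gN w / gD w) \<le> \<Delta> * (gN \<omega> / gD \<omega>)"
      if "w = (-(\<omega>*\<Delta>) + 2 * pi * of_int k)/\<Delta>" for w k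
      using H1[OF D sg mpf[rule_format, OF D] that] unfolding h1_def PN PD .
    have h3n: "cmod h3 \<le> real n" unfolding h3_def by (rule hD3_le_n)
    have "\<Delta> * cmod h3 \<le> \<Delta> * real n" using h3n D by (intro mult_left_mono) auto
    hence h3t: "\<Delta> * cmod h3 \<le> t" using nD by (simp add: mult.commute)
    have h2D: "cmod h2 \<le> \<Delta>" unfolding h2_def using D by (rule hD2_le)
    have "\<bar>2 * Re (h1 * h3 * cnj (h2 * h3))\<bar> \<le> 2 * cmod (h1 * h3 * cnj (h2 * h3))"
      using abs_Re_le_cmod[of "h1 * h3 * cnj (h2 * h3)"] by (simp only: abs_mult)
    also have "\<dots> = 2 * (cmod h1 * cmod h3) * cmod (h2 * h3)" by (simp add: norm_mult)
    finally have E: "\<bar>2 * Re (h1 * h3 * cnj (h2 * h3))\<bar> \<le> 2 * (cmod h1 * cmod h3) * cmod (h2 * h3)" .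
    show ?thesis
    proof (cases "\<bar>\<omega>\<bar> < 1")
      case True
      have cb: "carma_bound p q t C \<omega> = (7^(2*p) / 2^(2*p+q) + 1) * t^2"
        using True by (simp add: carma_bound_def indicator_def abs_less_iff)
      have "cmod h1 * (gN (-\<omega>) / gD (-\<omega>)) \<le> \<Delta> * (gN \<omega> / gD \<omega>)"
        by (rule H1k[of _ 0]) (use D in simp)
      hence "cmod h1 * (gN \<omega> / gD \<omega>) \<le> \<Delta> * (gN \<omega> / gD \<omega>)" by (simp only: evN evD)
      moreover have "gN \<omega> / gD \<omega> > 0" using gNpos[of \<omega>] gDpos[of \<omega>] by simp
      ultimately have h1D: "cmod h1 \<le> \<Delta>" using mult_le_cancel_right_pos by blast
      have X: "cmod h1 * cmod h3 \<le> \<Delta> * real n" using h1D h3n D by (intro mult_mono) auto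
      have Y: "cmod (h2 * h3) \<le> \<Delta> * real n" unfolding norm_mult using h2D h3n D by (intro mult_mono) auto
      have "(cmod h1 * cmod h3) * cmod (h2 * h3) \<le> (\<Delta> * real n) * (\<Delta> * real n)"
        by (rule mult_mono[OF X Y]) (use D in auto)
      hence "2 * (cmod h1 * cmod h3) * cmod (h2 * h3) \<le> 2 * (\<Delta> * real n) * (\<Delta> * real n)" by simp
      also have "\<dots> \<le> 2 * t * t" using nD D tp by (intro mult_mono) (auto simp: mult.commute)
      also have "\<dots> \<le> (7^(2*p) / 2^(2*p+q) + 1) * t^2"
        using const_ge[OF qp] tp by (simp add: power2_eq_square)
      finally show ?thesis using E cb by (simp add: h1_def h2_def h3_def n_def)
    next
      case False
      hence w1: "\<bar>\<omega>\<bar> \<ge> 1" by simp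
      have nin: "\<omega> \<notin> {-1<..<1}" using False by auto
      have cb: "carma_bound p q t C \<omega> = C / \<omega>^2"
        using nin by (simp add: carma_bound_def power_int_minus divide_inverse)
      define u where "u = \<omega> * \<Delta> / (2 * pi)"
      define k where "k = round u"
      define y where "y = \<omega> * \<Delta> - 2 * pi * of_int k"
      define w where "w = (-(\<omega>*\<Delta>) + 2 * pi * of_int k)/\<Delta>"
      have wy: "w = - y / \<Delta>" by (simp add: w_def y_def)
      have yu: "y = 2 * pi * (u - of_int k)" using pi_gt_zero by (simp add: y_def u_def field_simps)
      have "\<bar>u - of_int k\<bar> \<le> 1/2" using of_int_round_abs_le[of u] by (simp add: k_def abs_minus_commute)
      hence ypi: "\<bar>y\<bar> \<le> pi" using pi_gt_zero by (simp add: yu abs_mult)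
      have "\<bar>u - of_int k\<bar> \<le> \<bar>u\<bar>" using round_diff_minimal[of u 0] by (simp add: k_def)
      hence "2 * pi * \<bar>u - of_int k\<bar> \<le> 2 * pi * \<bar>u\<bar>" using pi_gt_zero by (intro mult_left_mono) auto
      moreover have "\<bar>y\<bar> = 2 * pi * \<bar>u - of_int k\<bar>" using pi_gt_zero by (simp add: yu abs_mult)
      moreover have "2 * pi * \<bar>u\<bar> = \<bar>\<omega> * \<Delta>\<bar>" using pi_gt_zero by (simp add: u_def abs_divide)
      ultimately have "\<bar>y\<bar> \<le> \<bar>\<omega> * \<Delta>\<bar>" by simp
      hence wom: "\<bar>w\<bar> \<le> \<bar>\<omega>\<bar>" using D by (simp add: wy abs_mult divide_le_eq)
      have h1K: "cmod h1 \<le> \<Delta> * K * ((1+\<bar>w\<bar>)/(1+\<bar>\<omega>\<bar>))"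
      proof -
        have a1: "cmod h1 * (gN w / gD w) \<le> \<Delta> * (gN \<omega> / gD \<omega>)" by (rule H1k[of _ k]) (simp add: w_def)
        have a2: "gN \<omega> * gD w \<le> K * gD \<omega> * gN w * ((1+\<bar>w\<bar>)/(1+\<bar>\<omega>\<bar>))" by (rule KR[OF wom])
        have "cmod h1 * gN w * gD \<omega> \<le> \<Delta> * (gN \<omega> * gD w)"
          using a1 gNpos[of w] gDpos[of w] gDpos[of \<omega>] by (simp add: field_simps)
        also have "\<dots> \<le> \<Delta> * (K * gD \<omega> * gN w * ((1+\<bar>w\<bar>)/(1+\<bar>\<omega>\<bar>)))"
          using a2 D by (intro mult_left_mono) auto
        finally have "cmod h1 * (gN w * gD \<omega>) \<le> (\<Delta> * K * ((1+\<bar>w\<bar>)/(1+\<bar>\<omega>\<bar>))) * (gN w * gD \<omega>)"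
          by (simp add: algebra_simps)
        moreover have "gN w * gD \<omega> > 0" using gNpos[of w] gDpos[of \<omega>] by simp
        ultimately show ?thesis using mult_le_cancel_right_pos by blast
      qed
      have ey: "exp (\<i> * of_real \<omega> * of_real \<Delta>) = exp (\<i> * of_real y)"
      proof -
        have "\<i> * of_real \<omega> * of_real \<Delta> = \<i> * of_real y + \<i> * (of_int k * (of_real pi * 2))"
          by (simp add: y_def algebra_simps)
        thus ?thesis by (simp only: exp_plus_2pin)
      qed
      have h3w: "cmod h3 * (1 + \<bar>w\<bar>) \<le> (t + 6) / \<Delta>"
      proof (cases "y = 0")
        case True
        hence "w = 0" by (simp add: wy)
        thus ?thesis using h3t D by (simp add: field_simps)
      next
        case False
        have l: "\<bar>y\<bar>/3 \<le> cmod (exp (\<i> * of_real y) - 1)" by (rule cmod_expi_m1_ge[OF ypi])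
        have yp: "\<bar>y\<bar>/3 > 0" using False by simp
        have l': "\<bar>y\<bar>/3 \<le> cmod (1 - exp (\<i> * of_real \<omega> * of_real \<Delta>))"
          using l ey by (simp only: norm_minus_commute)
        hence pos: "cmod (1 - exp (\<i> * of_real \<omega> * of_real \<Delta>)) > 0" using yp by linarith
        hence ne: "exp (\<i> * of_real \<omega> * of_real \<Delta>) \<noteq> 1" by auto
        have "cmod h3 \<le> 2 / cmod (1 - exp (\<i> * of_real \<omega> * of_real \<Delta>))"
          unfolding h3_def by (rule hD3_le2[OF ne])
        also have "\<dots> \<le> 2 / (\<bar>y\<bar>/3)"
          using l' yp pos mult_pos_pos[OF pos yp] by (intro divide_left_mono) auto
        finally have "cmod h3 * \<bar>y\<bar> \<le> 6" using False by (simp add: field_simps)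
        hence "cmod h3 * \<bar>w\<bar> \<le> 6 / \<Delta>" using D by (simp add: wy abs_mult field_simps)
        moreover have "cmod h3 \<le> t / \<Delta>" using h3t D by (simp add: field_simps)
        ultimately show ?thesis by (simp add: algebra_simps add_divide_distrib)
      qed
      have X: "cmod h1 * cmod h3 \<le> K * (t + 6) / \<bar>\<omega>\<bar>"
      proof -
        have "cmod h1 * cmod h3 \<le> \<Delta> * K * ((1+\<bar>w\<bar>)/(1+\<bar>\<omega>\<bar>)) * cmod h3"
          using h1K by (intro mult_right_mono) auto
        also have "\<dots> = \<Delta> * K * (cmod h3 * (1+\<bar>w\<bar>)) / (1+\<bar>\<omega>\<bar>)" by simp
        also have "\<dots> \<le> \<Delta> * K * ((t + 6) / \<Delta>) / (1+\<bar>\<omega>\<bar>)"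
          using h3w D Kp by (intro divide_right_mono mult_left_mono) auto
        also have "\<dots> = K * (t + 6) / (1+\<bar>\<omega>\<bar>)" using D by simp
        also have "\<dots> \<le> K * (t + 6) / \<bar>\<omega>\<bar>"
          using Kp tp w1 by (intro divide_left_mono) auto
        finally show ?thesis .
      qed
      have Y: "cmod (h2 * h3) \<le> 2 / \<bar>\<omega>\<bar>" unfolding h2_def h3_def
        by (rule hD23_le) (use w1 in auto)
      have "(cmod h1 * cmod h3) * cmod (h2 * h3) \<le> (K * (t + 6) / \<bar>\<omega>\<bar>) * (2 / \<bar>\<omega>\<bar>)"
        by (rule mult_mono[OF X Y]) (use Kp tp in auto)
      hence "2 * (cmod h1 * cmod h3) * cmod (h2 * h3) \<le> 2 * (K * (t + 6) / \<bar>\<omega>\<bar>) * (2 / \<bar>\<omega>\<bar>)" by simp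
      also have "\<dots> = C / \<omega>^2" by (simp add: C_def power2_eq_square field_simps)
      finally show ?thesis using E cb by (simp add: h1_def h2_def h3_def n_def)
    qed
  qed
  show ?thesis
    using Cp main bound_int by (intro exI[of _ C] conjI exI[of _ 1]) auto
qed

end
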